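(* Let $r\ge2$ be an integer and $\psi\in C_p(\mathbb{R})$. Assume there exist constants $m>0$ and $\alpha\ge0$ such that (i) $m\,d(x)\le\psi(x)$ for all $x\in[0,1]$, and (ii) $\Delta_{n,k}(y;\psi)\le\alpha$ for all $n\in\mathbb{N}_0$, $k\in\{0,1,\dots,r^n-1\}$, $y\in(0,1)$. If $2mr>\alpha$, then $U_\psi\in\mathcal{P}_c$ with $c=\frac{2mr-\alpha}{2(r-1)}$.
   Context: $C_p(\mathbb{R})$ denotes the set of all continuous functions $f:\mathbb{R}\to\mathbb{R}$ periodic with period $1$ with $f(0)=0$; $\mathbb{N}_0=\mathbb{N}\cup\{0\}$. $d(x)=\min\{|x-z|:z\in\mathbb{Z}\}$. For $\psi\in C_p(\mathbb{R})$, $U_\psi(x)=\sum_{j=0}^\infty r^{-j}\psi(r^jx)$. For $f\in C_p(\mathbb{R})$ and $(n,k,y)\in\mathbb{N}_0\times\mathbb{Z}\times(0,1)$: $\delta^+_{n,k}(y;f)=\dfrac{f(\frac{k+1}{r^n})-f(\frac{k+y}{r^n})}{\frac{1-y}{r^n}}$, $\delta^-_{n,k}(y;f)=\dfrac{f(\frac{k+y}{r^n})-f(\frac{k}{r^n})}{\frac{y}{r^n}}$, $\Delta_{n,k}(y;f)=2r^n(\delta^+_{n,k}(y;f)-\delta^-_{n,k}(y;f))$. For $c>0$, $\mathcal{P}_c$ is the set of $f\in C_p(\mathbb{R})$ with $\delta^+_{n,k}(y;f)-\delta^-_{n,k}(y;f)\le-c$ for all $(n,k,y)\in\mathbb{N}_0\times\mathbb{Z}\times(0,1)$.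 *)

theory Defs
  imports "HOL-Analysis.Analysis"
begin

definition Cp :: "(real \<Rightarrow> real) \<Rightarrow> bool" where
  "Cp f \<longleftrightarrow> continuous_on UNIV f \<and> (\<forall>x. f (x + 1) = f x) \<and> f 0 = 0"

definition dist_int :: "real \<Rightarrow> real" where
  "dist_int x = (INF z\<in>\<int>. \<bar>x - z\<bar>)"

definition U :: "nat \<Rightarrow> (real \<Rightarrow> real) \<Rightarrow> real \<Rightarrow> real" where
  "U r \<psi> x = (\<Sum>j. \<psi> (real r ^ j * x) / real r ^ j)"

definition delta_plus :: "nat \<Rightarrow> nat \<Rightarrow> int \<Rightarrow> real \<Rightarrow> (real \<Rightarrow> real) \<Rightarrow> real" where
  "delta_plus r n k y f =
     (f ((real_of_int k + 1) / real r ^ n) - f ((real_of_int k + y) / real r ^ n))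
       / ((1 - y) / real r ^ n)"

definition delta_minus :: "nat \<Rightarrow> nat \<Rightarrow> int \<Rightarrow> real \<Rightarrow> (real \<Rightarrow> real) \<Rightarrow> real" where
  "delta_minus r n k y f =
     (f ((real_of_int k + y) / real r ^ n) - f (real_of_int k / real r ^ n))
       / (y / real r ^ n)"

definition Delta :: "nat \<Rightarrow> nat \<Rightarrow> int \<Rightarrow> real \<Rightarrow> (real \<Rightarrow> real) \<Rightarrow> real" where
  "Delta r n k y f = 2 * real r ^ n * (delta_plus r n k y f - delta_minus r n k y f)"

definition Pc :: "nat \<Rightarrow> real \<Rightarrow> (real \<Rightarrow> real) set" where
  "Pc r c = {f. Cp f \<and> (\<forall>n::nat. \<forall>k::int. \<forall>y\<in>{0<..<1}.
      delta_plus r n k y f - delta_minus r n k y f \<le> - c)}"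

end

theory Submission
  imports Defs
begin


lemma per_nat: assumes "Cp \<psi>" shows "\<psi> (x + real n) = \<psi> x"
proof (induction n)
  case (Suc n)
  have "\<psi> (x + real (Suc n)) = \<psi> ((x + real n) + 1)" by (simp add: algebra_simps)
  also have "\<dots> = \<psi> (x + real n)" using assms by (simp add: Cp_def)
  finally show ?case using Suc by simp
qed simp

lemma per_int: assumes "Cp \<psi>" shows "\<psi> (x + real_of_int k) = \<psi> x"
proof (cases "k \<ge> 0")
  case True
  define n where "n = nat k"
  have "k = int n" using True by (simp add: n_def)
  then show ?thesis using per_nat[OF assms] by simp
next
  case False
  define n where "n = nat (- k)"
  have n: "k = - int n" using False by (simp add: n_def)
  have "\<psi> x = \<psi> ((x - real n) + real n)" by simp
  also have "\<dots> = \<psi> (x - real n)" by (rule per_nat[OF assms])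
  finally show ?thesis using n by simp
qed

lemma psi_int: assumes "Cp \<psi>" shows "\<psi> (real_of_int k) = 0"
  using per_int[OF assms, of 0 k] assms by (simp add: Cp_def)

lemma psi_frac: assumes "Cp \<psi>" shows "\<psi> x = \<psi> (frac x)"
  using per_int[OF assms, of "frac x" "\<lfloor>x\<rfloor>"] by (simp add: frac_def)

lemma psi_bounded: assumes "Cp \<psi>" obtains B where "\<And>x. \<bar>\<psi> x\<bar> \<le> B"
proof -
  have "compact (\<psi> ` {0..1})"
    using assms by (intro compact_continuous_image) (auto simp: Cp_def intro: continuous_on_subset)
  then have "bounded (\<psi> ` {0..1})" by (rule compact_imp_bounded)
  then obtain B where B0: "\<forall>y\<in>\<psi> ` {0..1}. norm y \<le> B" unfolding bounded_iff by blast
  have B: "\<And>y. y \<in> \<psi> ` {0..1} \<Longrightarrow> \<bar>y\<bar> \<le> B" using B0 by auto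
  have "\<bar>\<psi> x\<bar> \<le> B" for x
    using B[of "\<psi> (frac x)"] psi_frac[OF assms, of x] frac_lt_1[of x] frac_ge_0[of x] by auto
  then show ?thesis using that by blast
qed

lemma dist_int_ge: assumes "0 \<le> s" "s \<le> 1" shows "min s (1 - s) \<le> dist_int s"
  unfolding dist_int_def
proof (rule cINF_greatest)
  show "\<int> \<noteq> {}" by auto
  fix z :: real assume "z \<in> \<int>"
  then obtain j where j: "z = of_int j" by (auto elim: Ints_cases)
  show "min s (1 - s) \<le> \<bar>s - z\<bar>"
  proof (cases "j \<le> 0")
    case True then show ?thesis using assms j by auto
  next
    case False then have "real_of_int j \<ge> 1" by simp
    then show ?thesis using assms j by auto
  qed
qed

definition gq :: "real \<Rightarrow> real" where "gq x = frac x * (1 - frac x)"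

lemma gq_nonneg: "0 \<le> gq x" unfolding gq_def using frac_lt_1[of x] frac_ge_0[of x] by simp

lemma gq_le: "gq x \<le> 1/4"
proof -
  have "gq x = 1/4 - (frac x - 1/2)^2" unfolding gq_def by (simp add: power2_eq_square algebra_simps)
  then show ?thesis by simp
qed

lemma gq_neg: "gq (- x) = gq x" unfolding gq_def by (simp add: frac_neg algebra_simps)

lemma gq_int: "gq (x + real_of_int k) = gq x" unfolding gq_def
  by (simp add: frac_def)

lemma B0: assumes "u \<ge> 0" "(r::real) \<ge> 1" shows "u * (u - 1) + r * gq u \<ge> 0"
proof (cases "u \<ge> 1")
  case True then show ?thesis using gq_nonneg[of u] assms by simp
next
  case False
  then have "frac u = u" using assms by (simp add: frac_eq)
  then have "u * (u - 1) + r * gq u = (r - 1) * (u * (1 - u))" by (simp add: gq_def algebra_simps)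
  then show ?thesis using assms False by simp
qed

lemma B1: assumes "(r::real) \<ge> 2" "0 \<le> s" "s \<le> 1/2"
  shows "r/(r-1) * (s * (1 - s)) \<le> s + r/(r-1) * gq (r * s) / r"
proof -
  have r0: "r \<noteq> 0" "r - 1 > 0" using assms by auto
  have "0 \<le> (r * s) * (r * s - 1) + r * gq (r * s)" using B0[of "r * s" r] assms by simp
  also have "\<dots> = r * (r * s * s - s + gq (r * s))" by (simp add: algebra_simps)
  finally have h: "0 \<le> r * s * s - s + gq (r * s)" using assms by (simp add: zero_le_mult_iff)
  have e1: "r/(r-1) * (s * (1 - s)) = (r * s * (1 - s)) / (r - 1)" by simp
  have e2: "s + r/(r-1) * gq (r * s) / r = ((r - 1) * s + gq (r * s)) / (r - 1)"
    using r0 by (simp add: field_simps)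
  have "r * s * (1 - s) \<le> (r - 1) * s + gq (r * s)" using h by (simp add: algebra_simps)
  then show ?thesis unfolding e1 e2 using r0 by (intro divide_right_mono) auto
qed

lemma B2: assumes "(r::nat) \<ge> 2"
  shows "real r/(real r-1) * gq z \<le> min (frac z) (1 - frac z) + real r/(real r-1) * gq (real r * z) / real r"
proof -
  define s where "s = frac z"
  have s: "0 \<le> s" "s < 1" using s_def frac_lt_1 frac_ge_0 by auto
  have rz: "gq (real r * z) = gq (real r * s)"
  proof -
    have "r * z = r * s + real_of_int (int r * \<lfloor>z\<rfloor>)" by (simp add: s_def frac_def algebra_simps)
    then show ?thesis using gq_int[of "real r * s" "int r * \<lfloor>z\<rfloor>"] by metis
  qed
  have gz: "gq z = s * (1 - s)" by (simp add: gq_def s_def)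
  show ?thesis
  proof (cases "s \<le> 1/2")
    case True
    then show ?thesis using B1[of r s] s assms rz gz s_def by simp
  next
    case False
    define s' where "s' = 1 - s"
    have gs: "gq (real r * s) = gq (real r * s')"
    proof -
      have e: "real r * s = - (real r * s') + real_of_int (int r)" by (simp add: s'_def algebra_simps)
      show ?thesis unfolding e gq_int gq_neg ..
    qed
    have m: "min (frac z) (1 - frac z) = s'" using False by (simp add: s_def s'_def min_def)
    have g1: "gq z = s' * (1 - s')" using gz by (simp add: s'_def algebra_simps)
    have "real r/(real r-1) * (s' * (1 - s')) \<le> s' + real r/(real r-1) * gq (real r * s') / real r"
      using B1[of r s'] s assms False by (simp add: s'_def)
    then show ?thesis unfolding m g1 rz gs .
  qed
qed



lemma term_bound: assumes "Cp \<psi>" "\<And>x. \<bar>\<psi> x\<bar> \<le> B" "r \<ge> 2"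
  shows "norm (\<psi> (real r ^ j * x) / real r ^ j) \<le> B * (1 / real r) ^ j"
proof -
  have "norm (\<psi> (real r ^ j * x) / real r ^ j) = \<bar>\<psi> (real r ^ j * x)\<bar> / real r ^ j"
    by (simp add: abs_divide)
  also have "\<dots> \<le> B / real r ^ j" using assms by (intro divide_right_mono) auto
  finally show ?thesis by (simp add: power_one_over)
qed

lemma geo_summ: assumes "r \<ge> 2" shows "summable (\<lambda>j. B * (1 / real r) ^ j)"
  using assms by (intro summable_mult summable_geometric) auto

lemma U_sums: assumes "Cp \<psi>" "r \<ge> 2"
  shows "(\<lambda>j. \<psi> (real r ^ j * x) / real r ^ j) sums U r \<psi> x"
proof -
  obtain B where B: "\<And>x. \<bar>\<psi> x\<bar> \<le> B" using psi_bounded[OF assms(1)] by blast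
  have "summable (\<lambda>j. \<psi> (real r ^ j * x) / real r ^ j)"
    by (rule summable_comparison_test[OF _ geo_summ[OF assms(2), of B]])
       (use term_bound[OF assms(1) B assms(2)] in auto)
  then show ?thesis unfolding U_def by (simp add: summable_sums)
qed

lemma U_cont: assumes "Cp \<psi>" "r \<ge> 2" shows "continuous_on UNIV (U r \<psi>)"
proof -
  obtain B where B: "\<And>x. \<bar>\<psi> x\<bar> \<le> B" using psi_bounded[OF assms(1)] by blast
  have ul: "uniform_limit UNIV (\<lambda>n x. \<Sum>i<n. \<psi> (real r ^ i * x) / real r ^ i)
        (\<lambda>x. \<Sum>i. \<psi> (real r ^ i * x) / real r ^ i) sequentially"
    by (rule Weierstrass_m_test[OF _ geo_summ[OF assms(2), of B]])
       (use term_bound[OF assms(1) B assms(2)] in auto)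
  have c: "continuous_on UNIV \<psi>" using assms by (simp add: Cp_def)
  have "continuous_on UNIV (\<lambda>x. \<Sum>i<n. \<psi> (real r ^ i * x) / real r ^ i)" for n
    by (intro continuous_intros continuous_on_compose2[OF c]) (use assms in auto)
  then have "continuous_on UNIV (\<lambda>x. \<Sum>i. \<psi> (real r ^ i * x) / real r ^ i)"
    by (intro uniform_limit_theorem[OF _ ul]) auto
  then show ?thesis unfolding U_def[abs_def] by simp
qed

lemma U_Cp: assumes "Cp \<psi>" "r \<ge> 2" shows "Cp (U r \<psi>)"
proof -
  have "U r \<psi> (x + 1) = U r \<psi> x" for x
  proof -
    have "\<psi> (real r ^ j * (x + 1)) = \<psi> (real r ^ j * x)" for j
    proof -
      have e: "real r ^ j * (x + 1) = real r ^ j * x + real_of_int (int (r ^ j))" by (simp add: algebra_simps)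
      show ?thesis unfolding e by (rule per_int[OF assms(1)])
    qed
    then show ?thesis unfolding U_def by simp
  qed
  moreover have "U r \<psi> 0 = 0" using assms(1) by (simp add: U_def Cp_def)
  ultimately show ?thesis using U_cont[OF assms] by (simp add: Cp_def)
qed

lemma psi_lower: assumes "Cp \<psi>" "\<forall>x\<in>{0..1}. m * dist_int x \<le> \<psi> x" "m > 0"
  shows "m * min (frac x) (1 - frac x) \<le> \<psi> x"
proof -
  have "m * min (frac x) (1 - frac x) \<le> m * dist_int (frac x)"
    using dist_int_ge[of "frac x"] frac_lt_1[of x] frac_ge_0[of x] assms(3) by auto
  also have "\<dots> \<le> \<psi> (frac x)" using assms(2) frac_lt_1[of x] frac_ge_0[of x] by auto
  finally show ?thesis using psi_frac[OF assms(1)] by simp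
qed

lemma partial_lower:
  assumes "Cp \<psi>" "\<forall>x\<in>{0..1}. m * dist_int x \<le> \<psi> x" "m > 0" "r \<ge> 2"
  shows "m * (real r/(real r-1)) * (gq z - gq (real r ^ N * z) / real r ^ N)
     \<le> (\<Sum>i<N. \<psi> (real r ^ i * z) / real r ^ i)"
proof (induction N arbitrary: z)
  case 0 then show ?case by simp
next
  case (Suc N)
  define c where "c = real r/(real r-1)"
  have c: "c > 0" using assms by (simp add: c_def)
  have IH: "m * c * (gq (real r * z) - gq (real r ^ N * (real r * z)) / real r ^ N)
     \<le> (\<Sum>i<N. \<psi> (real r ^ i * (real r * z)) / real r ^ i)" using Suc c_def by blast
  have sum: "(\<Sum>i<Suc N. \<psi> (real r ^ i * z) / real r ^ i)
     = \<psi> z + (\<Sum>i<N. \<psi> (real r ^ i * (real r * z)) / real r ^ i) / real r"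
    unfolding sum.lessThan_Suc_shift by (simp add: sum_divide_distrib algebra_simps)
  have B: "c * gq z \<le> min (frac z) (1 - frac z) + c * gq (real r * z) / real r"
    using B2[OF assms(4), of z] by (simp add: c_def)
  have pl: "m * min (frac z) (1 - frac z) \<le> \<psi> z" by (rule psi_lower[OF assms(1-3)])
  have rN: "real r ^ N * (real r * z) = real r ^ Suc N * z" by simp
  have "m * c * (gq z - gq (real r ^ Suc N * z) / real r ^ Suc N)
      = m * (c * gq z) - m * c * gq (real r ^ Suc N * z) / real r ^ Suc N" by (simp add: algebra_simps)
  also have "\<dots> \<le> m * min (frac z) (1 - frac z) + m * c * gq (real r * z) / real r
        - m * c * gq (real r ^ Suc N * z) / real r ^ Suc N"
    using mult_left_mono[OF B, of m] assms(3) by (simp add: algebra_simps)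
  also have "\<dots> = m * min (frac z) (1 - frac z) + (m * c * (gq (real r * z) - gq (real r ^ N * (real r * z)) / real r ^ N)) / real r"
    unfolding rN using assms(4) by (simp add: field_simps)
  also have "\<dots> \<le> \<psi> z + (\<Sum>i<N. \<psi> (real r ^ i * (real r * z)) / real r ^ i) / real r"
    using pl IH divide_right_mono[OF IH, of "real r"] by simp
  finally show ?case unfolding sum c_def .
qed

lemma U_lower:
  assumes "Cp \<psi>" "\<forall>x\<in>{0..1}. m * dist_int x \<le> \<psi> x" "m > 0" "r \<ge> 2"
  shows "m * (real r/(real r-1)) * gq z \<le> U r \<psi> z"
proof -
  define c where "c = m * (real r/(real r-1))"
  have lim1: "(\<lambda>N. c * (gq z - gq (real r ^ N * z) / real r ^ N)) \<longlonglongrightarrow> c * (gq z - 0)"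
  proof (intro tendsto_intros)
    have "(\<lambda>N. (1/4) * (1 / real r) ^ N) \<longlonglongrightarrow> (1/4) * 0"
      using assms(4) by (intro tendsto_intros LIMSEQ_power_zero) auto
    then have z: "(\<lambda>N. (1/4) * (1 / real r) ^ N) \<longlonglongrightarrow> 0" by simp
    show "(\<lambda>N. gq (real r ^ N * z) / real r ^ N) \<longlonglongrightarrow> 0"
    proof (rule Lim_null_comparison[OF _ z])
      show "\<forall>\<^sub>F N in sequentially. norm (gq (real r ^ N * z) / real r ^ N) \<le> 1 / 4 * (1 / real r) ^ N"
      proof (intro always_eventually allI)
        fix N
        have p: "real r ^ N > 0" using assms by simp
        have "norm (gq (real r ^ N * z) / real r ^ N) = gq (real r ^ N * z) / real r ^ N"
          using gq_nonneg p by simp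
        also have "\<dots> \<le> (1/4) / real r ^ N" using gq_le p by (intro divide_right_mono) auto
        also have "\<dots> = 1/4 * (1 / real r) ^ N" by (simp add: power_one_over)
        finally show "norm (gq (real r ^ N * z) / real r ^ N) \<le> 1 / 4 * (1 / real r) ^ N" .
      qed
    qed
  qed
  have lim2: "(\<lambda>N. \<Sum>i<N. \<psi> (real r ^ i * z) / real r ^ i) \<longlonglongrightarrow> U r \<psi> z"
    using U_sums[OF assms(1,4)] by (simp add: sums_def)
  show ?thesis
    using LIMSEQ_le[OF lim1 lim2] partial_lower[OF assms] unfolding c_def by simp
qed



lemma delta_shift: assumes "Cp \<psi>" "r \<ge> 2"
  shows "delta_plus r p k y \<psi> - delta_minus r p k y \<psi>
       = delta_plus r p (k mod int (r^p)) y \<psi> - delta_minus r p (k mod int (r^p)) y \<psi>"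
proof -
  define k' where "k' = k mod int (r^p)"
  define q where "q = k div int (r^p)"
  have kk: "k = k' + int (r^p) * q" by (simp add: k'_def q_def)
  have Q: "real r ^ p \<noteq> 0" using assms by simp
  have e: "\<psi> ((real_of_int k + t) / real r ^ p) = \<psi> ((real_of_int k' + t) / real r ^ p)" for t
  proof -
    have e: "(real_of_int k + t) / real r ^ p = (real_of_int k' + t) / real r ^ p + real_of_int q"
      using Q unfolding kk by (simp add: field_simps)
    show ?thesis unfolding e by (rule per_int[OF assms(1)])
  qed
  have e0: "\<psi> (real_of_int k / real r ^ p) = \<psi> (real_of_int k' / real r ^ p)"
    using e[of 0] by simp
  show ?thesis unfolding delta_plus_def delta_minus_def e e0 k'_def[symmetric] ..
qed

lemma geo_bound: assumes "(R::real) \<ge> 2" shows "(\<Sum>j<n. (1/R)^(n-j)) \<le> 1/(R-1)"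
proof (induction n)
  case 0 then show ?case using assms by simp
next
  case (Suc n)
  have "(\<Sum>j<Suc n. (1/R)^(Suc n-j)) = (\<Sum>j<n. (1/R)^(Suc n-j)) + 1/R" by simp
  also have "(\<Sum>j<n. (1/R)^(Suc n-j)) = (1/R) * (\<Sum>j<n. (1/R)^(n-j))"
    by (simp add: sum_distrib_left Suc_diff_le less_imp_le)
  also have "(1/R) * (\<Sum>j<n. (1/R)^(n-j)) + 1/R \<le> (1/R) * (1/(R-1)) + 1/R"
    using Suc assms by (intro add_right_mono mult_left_mono) auto
  also have "\<dots> = 1/(R-1)" using assms by (simp add: field_simps)
  finally show ?case .
qed



lemma hq: "(u::real) \<noteq> 0 \<Longrightarrow> (a / u - b / u) / (c / (u * Q)) = (a - b) / (c / Q)"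
  by (simp add: divide_simps diff_divide_distrib[symmetric])

lemma hm: "(u::real) \<noteq> 0 \<Longrightarrow> u * (a / (u * Q)) = a / Q"
  by (metis mult.assoc mult.commute nonzero_mult_div_cancel_left times_divide_eq_right divide_divide_eq_left)

lemma mod_range: "(0::int) < M \<Longrightarrow> 0 \<le> k mod M \<and> k mod M \<le> M - 1"
proof -
  assume a: "0 < M" have "k mod M < M" using a by simp
  then show ?thesis using a by simp
qed

theorem theorem3p5:
  fixes r :: nat and \<psi> :: "real \<Rightarrow> real" and m \<alpha> :: real
  assumes "r \<ge> 2"
    and "Cp \<psi>"
    and "m > 0" and "\<alpha> \<ge> 0"
    and "\<forall>x\<in>{0..1}. m * dist_int x \<le> \<psi> x"
    and "\<forall>n::nat. \<forall>k::int. \<forall>y\<in>{0<..<1}. 0 \<le> k \<and> k \<le> int (r ^ n) - 1 \<longrightarrow> Delta r n k y \<psi> \<le> \<alpha>"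
    and "2 * m * real r > \<alpha>"
  shows "U r \<psi> \<in> Pc r ((2 * m * real r - \<alpha>) / (2 * (real r - 1)))"
proof -
  note r = assms(1) and cp = assms(2)
  define R where "R = real r"
  have R2: "R \<ge> 2" using r by (simp add: R_def)
  have main: "delta_plus r n k y (U r \<psi>) - delta_minus r n k y (U r \<psi>)
       \<le> - ((2 * m * real r - \<alpha>) / (2 * (real r - 1)))" if y: "y \<in> {0<..<1}" for n k y
  proof -
    define P where "P = R ^ n"
    have P0: "P > 0" using R2 by (simp add: P_def)
    define f where "f = (\<lambda>j x. \<psi> (R ^ j * x) / R ^ j)"
    define x0 where "x0 = real_of_int k / P"
    define xy where "xy = (real_of_int k + y) / P"
    define x1 where "x1 = (real_of_int k + 1) / P"
    define T where "T = (\<lambda>j. (f j x1 - f j xy) / ((1 - y) / P) - (f j xy - f j x0) / (y / P))"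
    define D where "D = delta_plus r n k y (U r \<psi>) - delta_minus r n k y (U r \<psi>)"
    have fs: "(\<lambda>j. f j x) sums U r \<psi> x" for x
      using U_sums[OF cp r] unfolding f_def R_def .
    have Ts: "T sums D"
      unfolding T_def D_def delta_plus_def delta_minus_def
      unfolding x0_def[symmetric] xy_def[symmetric] x1_def[symmetric] P_def[symmetric] R_def[symmetric]
      by (intro sums_diff sums_divide fs)
    define S where "S = (\<Sum>j<n. T j)"
    have Ts2: "(\<lambda>i. T (i + n)) sums (D - S)"
      using Ts sums_iff_shift[of T n "D - S"] unfolding S_def by simp
    have Tshift: "T (i + n) = - (f i (real_of_int k + y)) / (y * (1 - y))" for i
    proof -
      have a1: "R ^ (i + n) * x1 = real_of_int (int (r ^ i) * (k + 1))"
        using P0 r by (simp add: x1_def P_def R_def power_add)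
      have a0: "R ^ (i + n) * x0 = real_of_int (int (r ^ i) * k)"
        using P0 r by (simp add: x0_def P_def R_def power_add)
      have ay: "R ^ (i + n) * xy = R ^ i * (real_of_int k + y)"
        using P0 R2 by (simp add: xy_def P_def power_add)
      have y0: "y \<noteq> 0" "1 - y \<noteq> 0" using y by auto
      have "T (i + n) = (0 - \<psi> (R ^ i * (real_of_int k + y)) / R ^ (i + n)) / ((1 - y) / P)
           - (\<psi> (R ^ i * (real_of_int k + y)) / R ^ (i + n) - 0) / (y / P)"
        unfolding T_def f_def a1 a0 ay psi_int[OF cp] by simp
      also have "\<dots> = - (f i (real_of_int k + y)) / (y * (1 - y))"
        using y0 P0 R2 unfolding f_def P_def by (simp add: field_simps power_add)
      finally show ?thesis .
    qed
    have "(\<lambda>i. T (i + n)) sums (- U r \<psi> (real_of_int k + y) / (y * (1 - y)))"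
      unfolding Tshift by (intro sums_divide sums_minus fs)
    then have DS: "D - S = - U r \<psi> (real_of_int k + y) / (y * (1 - y))"
      using Ts2 sums_unique2 by blast
    have gqy: "gq (real_of_int k + y) = y * (1 - y)"
    proof -
      have "gq (real_of_int k + y) = gq y" using gq_int[of y k] by (simp add: add.commute)
      also have "\<dots> = y * (1 - y)" using y by (simp add: gq_def frac_eq)
      finally show ?thesis .
    qed
    have Ul: "m * (R/(R-1)) * (y * (1 - y)) \<le> U r \<psi> (real_of_int k + y)"
      using U_lower[OF cp assms(5,3) r, of "real_of_int k + y"] unfolding gqy R_def .
    have yy: "y * (1 - y) > 0" using y by auto
    have DS2: "D - S \<le> - (m * (R/(R-1)))"
    proof -
      have "m * (R/(R-1)) \<le> U r \<psi> (real_of_int k + y) / (y * (1 - y))"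
        using Ul yy by (simp add: le_divide_eq)
      then show ?thesis unfolding DS by simp
    qed
    have Tj: "T j \<le> \<alpha> / 2 * (1/R) ^ (n - j)" if j: "j < n" for j
    proof -
      define p where "p = n - j"
      have p1: "p \<ge> 1" using j by (simp add: p_def)
      have np: "n = j + p" using j by (simp add: p_def)
      define Q where "Q = R ^ p"
      have Q0: "Q > 0" using R2 by (simp add: Q_def)
      have Rj: "R ^ j > 0" using R2 by simp
      have fx: "f j ((real_of_int k + t) / P) = \<psi> ((real_of_int k + t) / Q) / R ^ j" for t
      proof -
        have e: "R ^ j * ((real_of_int k + t) / P) = (real_of_int k + t) / Q"
          unfolding P_def Q_def np power_add by (rule hm) (use R2 in simp)
        show ?thesis unfolding f_def e ..
      qed
      have fx0: "f j x0 = \<psi> (real_of_int k / Q) / R ^ j" using fx[of 0] by (simp add: x0_def)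
      have PQ: "P = R ^ j * Q" unfolding P_def Q_def np power_add ..
      have "T j = delta_plus r p k y \<psi> - delta_minus r p k y \<psi>"
        unfolding T_def x1_def xy_def fx fx0
        unfolding delta_plus_def delta_minus_def R_def[symmetric] Q_def[symmetric] PQ
        using Rj by (simp only: hq[OF less_imp_neq[OF Rj, symmetric]])
      also have "\<dots> = delta_plus r p (k mod int (r^p)) y \<psi> - delta_minus r p (k mod int (r^p)) y \<psi>"
        by (rule delta_shift[OF cp r])
      also have "\<dots> \<le> \<alpha> / (2 * Q)"
      proof -
        have "Delta r p (k mod int (r^p)) y \<psi> \<le> \<alpha>"
          using assms(6) y mod_range[of "int (r^p)" k] r by simp
        then show ?thesis using Q0 unfolding Delta_def Q_def R_def
          by (simp add: field_simps)
      qed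
      also have "\<dots> = \<alpha> / 2 * (1/R) ^ (n - j)"
        by (simp add: Q_def p_def power_one_over)
      finally show ?thesis .
    qed
    have "S \<le> (\<Sum>j<n. \<alpha> / 2 * (1/R) ^ (n - j))"
      unfolding S_def by (intro sum_mono Tj) simp
    also have "\<dots> = \<alpha> / 2 * (\<Sum>j<n. (1/R) ^ (n - j))" by (simp add: sum_distrib_left)
    also have "\<dots> \<le> \<alpha> / 2 * (1 / (R - 1))"
      using geo_bound[OF R2, of n] assms(4) by (intro mult_left_mono) auto
    finally have Sb: "S \<le> \<alpha> / 2 * (1 / (R - 1))" .
    have "D \<le> \<alpha> / 2 * (1 / (R - 1)) - m * (R/(R-1))" using Sb DS2 by linarith
    also have "\<dots> = - ((2 * m * real r - \<alpha>) / (2 * (real r - 1)))"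
    proof -
      have R1: "R - 1 \<noteq> 0" "R \<noteq> 1" using R2 by auto
      have e1: "\<alpha> / 2 * (1 / (R - 1)) = \<alpha> / (2 * (R - 1))" by simp
      have e2: "m * (R / (R - 1)) = (2 * m * R) / (2 * (R - 1))"
        by (metis mult_divide_mult_cancel_left_if times_divide_eq_right mult.assoc zero_neq_numeral)
      have "\<alpha> / 2 * (1 / (R - 1)) - m * (R/(R-1)) = (\<alpha> - 2 * m * R) / (2 * (R - 1))"
        unfolding e1 e2 diff_divide_distrib ..
      also have "\<dots> = - ((2 * m * R - \<alpha>) / (2 * (R - 1)))" unfolding minus_divide_left by simp
      finally show ?thesis unfolding R_def .
    qed
    finally show ?thesis unfolding D_def .
  qed
  show ?thesis unfolding Pc_def using U_Cp[OF cp r] main by blast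
qed

end
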